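(* Let $N\ge 2$ and fix real $\Omega\neq 0$ and real $\delta$. For each real coupling family $J=(J_{i,j})_{1\le i<j\le N}$, let $|\Psi_J\rangle$ be the ground state of $$\hat{H}_J = \Omega \sum_{i=1}^N \hat{\sigma}_i^x + \delta \sum_{i=1}^N \hat{\sigma}_i^z + \sum_{1\le i<j\le N} J_{i,j} \hat{\sigma}_i^z \hat{\sigma}_j^z$$ (which is unique up to phase since $\Omega\ne0$), and define the correlation functions $c_{i,j}(J)=\langle\Psi_J|\hat{S}_i^z \hat{S}_j^z|\Psi_J\rangle$ for $1\le i<j\le N$. Then the map $J\mapsto c(J)=(c_{i,j}(J))_{1\le i<j\le N}$ is injective; hence it is a bijection between the set of all real coupling families $J$ and the set of $J$-representable correlation families (its image). That is, if $c(J^{(1)})=c(J^{(2)})$ then $J^{(1)}=J^{(2)}$.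
   Context: $\hat\sigma_i^x,\hat\sigma_i^z$ are Pauli matrices acting on the $i$-th factor of $(\mathbb{C}^2)^{\otimes N}$, and $\hat S_i^z=\frac{\hbar}{2}\hat\sigma_i^z$ is the spin-$z$ operator on site $i$. A family $(c_{i,j})_{i<j}$ is called $J$-representable if it equals $c(J)$ for some real coupling family $J$, i.e. it arises as the ground-state two-point $z$-correlations of $\hat H_J$ for some choice of $J$ (with the given fixed $\Omega,\delta$). *)

theory Defs
  imports Complex_Main "Jordan_Normal_Form.Matrix" "Jordan_Normal_Form.Char_Poly"
begin

text \<open>Hilbert space (C^2)^{tensor N} with computational basis |b>, b < 2^N.
  Site i (1 <= i <= N) is the i-th tensor factor, i.e. bit (N - i) of b
  (most significant bit = first factor).\<close>

definition site_bit :: "nat \<Rightarrow> nat \<Rightarrow> nat" where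
  "site_bit N i = N - i"

definition sigma_x :: "nat \<Rightarrow> nat \<Rightarrow> complex mat" where
  "sigma_x N i = mat (2^N) (2^N)
     (\<lambda>(a, b). if a = flip_bit (site_bit N i) b then 1 else 0)"

definition sigma_z :: "nat \<Rightarrow> nat \<Rightarrow> complex mat" where
  "sigma_z N i = mat (2^N) (2^N)
     (\<lambda>(a, b). if a = b then (if bit b (site_bit N i) then -1 else 1) else 0)"

definition spin_z :: "real \<Rightarrow> nat \<Rightarrow> nat \<Rightarrow> complex mat" where
  "spin_z hbar N i = complex_of_real (hbar / 2) \<cdot>\<^sub>m sigma_z N i"

definition msum :: "nat \<Rightarrow> complex mat list \<Rightarrow> complex mat" where
  "msum n As = foldr (+) As (0\<^sub>m n n)"

definition hamiltonian :: "nat \<Rightarrow> real \<Rightarrow> real \<Rightarrow> (nat \<Rightarrow> nat \<Rightarrow> real) \<Rightarrow> complex mat" where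
  "hamiltonian N \<Omega> \<delta> J =
     msum (2^N) (map (\<lambda>i. complex_of_real \<Omega> \<cdot>\<^sub>m sigma_x N i) [1..<N+1])
   + msum (2^N) (map (\<lambda>i. complex_of_real \<delta> \<cdot>\<^sub>m sigma_z N i) [1..<N+1])
   + msum (2^N) (concat (map (\<lambda>i. map (\<lambda>j. complex_of_real (J i j) \<cdot>\<^sub>m (sigma_z N i * sigma_z N j))
                                    [i+1..<N+1]) [1..<N+1]))"

definition ground_state :: "complex mat \<Rightarrow> complex vec \<Rightarrow> bool" where
  "ground_state H \<psi> \<longleftrightarrow> \<psi> \<bullet>c \<psi> = 1 \<and>
     (\<exists>E::real. eigenvector H \<psi> (complex_of_real E) \<and> (\<forall>\<mu>. eigenvalue H \<mu> \<longrightarrow> E \<le> Re \<mu>))"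

definition expect :: "complex mat \<Rightarrow> complex vec \<Rightarrow> complex" where
  "expect A \<psi> = (A *\<^sub>v \<psi>) \<bullet>c \<psi>"

definition correlation :: "real \<Rightarrow> nat \<Rightarrow> complex vec \<Rightarrow> nat \<Rightarrow> nat \<Rightarrow> complex" where
  "correlation hbar N \<psi> i j = expect (spin_z hbar N i * spin_z hbar N j) \<psi>"

end

theory Submission imports Defs "HOL-Analysis.Function_Topology" "HOL-Analysis.Elementary_Metric_Spaces" begin


definition Qf :: "nat \<Rightarrow> (nat \<Rightarrow> nat \<Rightarrow> complex) \<Rightarrow> (nat \<Rightarrow> complex) \<Rightarrow> complex" where
  "Qf n h f = (\<Sum>a<n. \<Sum>b<n. cnj (f a) * h a b * f b)"

definition nrm :: "nat \<Rightarrow> (nat \<Rightarrow> complex) \<Rightarrow> real" where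
  "nrm n f = (\<Sum>a<n. (cmod (f a))^2)"

definition herm :: "nat \<Rightarrow> (nat \<Rightarrow> nat \<Rightarrow> complex) \<Rightarrow> bool" where
  "herm n h \<longleftrightarrow> (\<forall>a<n. \<forall>b<n. h a b = cnj (h b a))"

definition app :: "nat \<Rightarrow> (nat \<Rightarrow> nat \<Rightarrow> complex) \<Rightarrow> (nat \<Rightarrow> complex) \<Rightarrow> nat \<Rightarrow> complex" where
  "app n h f a = (\<Sum>b<n. h a b * f b)"

lemma compact_cball_complex: "compact (cball (0::complex) 1)"
proof -
  have eq: "cball (0::complex) 1 = (\<lambda>p. Complex (fst p) (snd p)) ` cball (0::real\<times>real) 1"
  proof (rule subset_antisym; rule subsetI)
    fix z :: complex assume "z \<in> cball 0 1"
    then have "z = Complex (fst (Re z, Im z)) (snd (Re z, Im z)) \<and> (Re z, Im z) \<in> cball (0::real\<times>real) 1"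
      by (simp add: dist_Pair_Pair dist_real_def cmod_def norm_Pair)
    then show "z \<in> (\<lambda>p. Complex (fst p) (snd p)) ` cball (0::real\<times>real) 1" by blast
  next
    fix z :: complex assume "z \<in> (\<lambda>p. Complex (fst p) (snd p)) ` cball (0::real\<times>real) 1"
    then obtain x y where "z = Complex x y" "(x, y) \<in> cball (0::real\<times>real) 1" by auto
    then show "z \<in> cball 0 1"
      by (simp add: dist_Pair_Pair dist_real_def cmod_def zero_prod_def norm_Pair)
  qed
  have "continuous_on UNIV (\<lambda>p::real\<times>real. Complex (fst p) (snd p))"
  proof -
    have "(\<lambda>p::real\<times>real. Complex (fst p) (snd p)) = (\<lambda>p. of_real (fst p) + \<i> * of_real (snd p))"
      by (auto simp: complex_eq_iff)
    moreover have "continuous_on UNIV (\<lambda>p::real\<times>real. of_real (fst p) + \<i> * (of_real (snd p) :: complex))"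
      by (intro continuous_intros)
    ultimately show ?thesis by (simp only:)
  qed
  then show ?thesis unfolding eq
    by (rule compact_continuous_image[OF continuous_on_subset compact_cball]) simp
qed

lemma compact_box: "compact {x::nat\<Rightarrow>complex. \<forall>i. x i \<in> (if i < n then cball 0 1 else {0})}"
proof -
  let ?S = "(\<lambda>i::nat. if i < n then cball 0 1 else {0::complex})"
  have "compactin (product_topology (\<lambda>i. euclidean) UNIV) (PiE UNIV ?S)"
    by (subst compactin_PiE) (auto simp: compact_cball_complex)
  then show ?thesis by (simp add: euclidean_product_topology PiE_UNIV_domain Pi_def)
qed

lemma cont_Q: "continuous_on UNIV (\<lambda>x::nat\<Rightarrow>complex. Re (Qf n h x))"
  unfolding Qf_def
  by (intro continuous_intros continuous_on_product_coordinates)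

lemma cont_nrm: "continuous_on UNIV (\<lambda>x::nat\<Rightarrow>complex. nrm n x)"
  unfolding nrm_def
  by (intro continuous_intros continuous_on_product_coordinates)

lemma nrm_nonneg: "nrm n f \<ge> 0" unfolding nrm_def by (simp add: sum_nonneg)

lemma nrm_eq: "of_real (nrm n f) = (\<Sum>a<n. cnj (f a) * f a)"
  unfolding nrm_def by (simp add: complex_norm_square[symmetric] mult.commute)

lemma Qf_cong: "(\<And>a. a < n \<Longrightarrow> f a = g a) \<Longrightarrow> Qf n h f = Qf n h g"
  unfolding Qf_def by (intro sum.cong refl) auto

lemma Qf_scale: "Qf n h (\<lambda>a. of_real c * f a) = of_real (c^2) * Qf n h f"
  unfolding Qf_def sum_distrib_left
  by (intro sum.cong refl) (simp add: power2_eq_square algebra_simps)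

lemma nrm_scale: "nrm n (\<lambda>a. of_real c * f a) = c^2 * nrm n f"
  unfolding nrm_def sum_distrib_left
  by (intro sum.cong refl) (simp add: norm_mult power_mult_distrib)


lemma herm_swap:
  assumes "herm n h"
  shows "(\<Sum>a<n. \<Sum>b<n. cnj (x a) * h a b * y b) = cnj (\<Sum>a<n. \<Sum>b<n. cnj (y a) * h a b * x b)"
proof -
  have "cnj (\<Sum>a<n. \<Sum>b<n. cnj (y a) * h a b * x b) = (\<Sum>a<n. \<Sum>b<n. y a * cnj (h a b) * cnj (x b))"
    by simp
  also have "\<dots> = (\<Sum>a<n. \<Sum>b<n. y a * h b a * cnj (x b))"
    using assms unfolding herm_def by (intro sum.cong refl) (metis complex_cnj_cnj lessThan_iff)
  also have "\<dots> = (\<Sum>b<n. \<Sum>a<n. y a * h b a * cnj (x b))" by (rule sum.swap)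
  also have "\<dots> = (\<Sum>a<n. \<Sum>b<n. cnj (x a) * h a b * y b)"
    by (simp add: mult.commute mult.left_commute)
  finally show ?thesis by simp
qed

lemma Qf_add: "Qf n h (\<lambda>a. x a + of_real t * w a) = Qf n h x
   + of_real t * (\<Sum>a<n. \<Sum>b<n. cnj (x a) * h a b * w b)
   + of_real t * (\<Sum>a<n. \<Sum>b<n. cnj (w a) * h a b * x b) + of_real (t^2) * Qf n h w"
  unfolding Qf_def
  by (simp add: algebra_simps sum.distrib sum_distrib_left power2_eq_square)

lemma cross_app: "(\<Sum>a<n. \<Sum>b<n. cnj (w a) * h a b * x b) = (\<Sum>a<n. cnj (w a) * app n h x a)"
  unfolding app_def by (simp add: sum_distrib_left mult.assoc)

lemma nrm_zero_iff: "nrm n f = 0 \<longleftrightarrow> (\<forall>a<n. f a = 0)"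
  unfolding nrm_def by (subst sum_nonneg_eq_0_iff) auto

lemma psd_zero:
  assumes herm: "herm n h" and psd: "\<And>f. Re (Qf n h f) \<ge> 0" and x0: "Re (Qf n h x) = 0"
  shows "\<forall>a<n. app n h x a = 0"
proof -
  define w where "w = app n h x"
  define s where "s = nrm n w"
  define c where "c = Re (Qf n h w)"
  have c0: "c \<ge> 0" using psd c_def by auto
  have A0: "s \<ge> 0" using nrm_nonneg s_def by auto
  have c2: "(\<Sum>a<n. \<Sum>b<n. cnj (w a) * h a b * x b) = of_real s"
    unfolding cross_app s_def nrm_eq w_def by (simp add: mult.commute)
  have c1: "(\<Sum>a<n. \<Sum>b<n. cnj (x a) * h a b * w b) = of_real s"
    using herm_swap[OF herm, of x w] c2 by simp
  have key: "Re (Qf n h (\<lambda>a. x a + of_real t * w a)) = 2 * t * s + t^2 * c" for t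
    unfolding Qf_add c1 c2 using x0 c_def by simp
  define t where "t = - s / (c + 1)"
  have "0 \<le> 2 * t * s + t^2 * c" using psd[of "\<lambda>a. x a + of_real t * w a"] key by simp
  then have "0 \<le> (c+1)^2 * (2 * t * s + t^2 * c)" using c0 by simp
  also have "(c+1)^2 * (2 * t * s + t^2 * c) = 2 * s * (t * (c + 1)) * (c + 1) + (t * (c + 1))^2 * c"
    by (simp add: algebra_simps power2_eq_square)
  also have "t * (c + 1) = - s" unfolding t_def using c0 by simp
  also have "2 * s * (- s) * (c + 1) + (- s)^2 * c = - (s^2 * (c + 2))"
    by (simp add: algebra_simps power2_eq_square)
  finally have "s^2 * (c+2) \<le> 0" by simp
  moreover have "s^2 * (c+2) \<ge> 0" using c0 by simp
  ultimately have "s^2 * (c+2) = 0" by linarith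
  then have "s = 0" using c0 by simp
  then show ?thesis using nrm_zero_iff s_def w_def by auto
qed


definition shift :: "(nat \<Rightarrow> nat \<Rightarrow> complex) \<Rightarrow> real \<Rightarrow> nat \<Rightarrow> nat \<Rightarrow> complex" where
  "shift h c a b = h a b - (if a = b then of_real c else 0)"

lemma Qf_shift: "Qf n (shift h c) f = Qf n h f - of_real c * of_real (nrm n f)"
proof -
  have "Qf n (shift h c) f = Qf n h f - (\<Sum>a<n. \<Sum>b<n. cnj (f a) * (if a = b then of_real c else 0) * f b)"
    unfolding Qf_def shift_def by (simp add: algebra_simps sum_subtractf)
  also have "(\<Sum>a<n. \<Sum>b<n. cnj (f a) * (if a = b then of_real c else 0) * f b) = (\<Sum>a<n. \<Sum>b<n. if a = b then of_real c * (cnj (f a) * f b) else 0)"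
    by (intro sum.cong refl) auto
  also have "\<dots> = (\<Sum>a<n. of_real c * (cnj (f a) * f a))"
    by (intro sum.cong refl) (simp add: sum.delta)
  finally show ?thesis by (simp add: nrm_eq sum_distrib_left)
qed

lemma app_shift: assumes "a < n" shows "app n (shift h c) f a = app n h f a - of_real c * f a"
proof -
  have "app n (shift h c) f a = app n h f a - (\<Sum>b<n. (if a = b then of_real c else 0) * f b)"
    unfolding app_def shift_def by (simp add: algebra_simps sum_subtractf)
  also have "(\<Sum>b<n. (if a = b then of_real c else 0) * f b) = (\<Sum>b<n. if a = b then of_real c * f b else 0)"
    by (intro sum.cong refl) auto
  also have "\<dots> = of_real c * f a" using assms by (simp add: sum.delta)
  finally show ?thesis .
qed

lemma herm_shift: assumes "herm n h" shows "herm n (shift h c)"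
  unfolding herm_def shift_def
proof (intro allI impI)
  fix a b assume "a < n" "b < n"
  then have "h a b = cnj (h b a)" using assms herm_def by blast
  then show "h a b - (if a = b then of_real c else 0) = cnj (h b a - (if b = a then of_real c else 0))" by simp
qed

lemma Qf_zero: "(\<And>a. a < n \<Longrightarrow> f a = 0) \<Longrightarrow> Qf n h f = 0"
  unfolding Qf_def by simp

lemma variational:
  assumes herm: "herm n h" and n0: "n > 0"
    and minE: "\<And>l g. (\<forall>a<n. app n h g a = l * g a) \<Longrightarrow> (\<exists>a<n. g a \<noteq> 0) \<Longrightarrow> E \<le> Re l"
  shows "Re (Qf n h f) \<ge> E * nrm n f \<and>
     (Re (Qf n h f) = E * nrm n f \<longrightarrow> (\<forall>a<n. app n h f a = E * f a))"
proof -
  define B where "B = {x::nat\<Rightarrow>complex. \<forall>i. x i \<in> (if i < n then cball 0 1 else {0})}"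
  define K where "K = B \<inter> (nrm n -` {1})"
  have "compact K" unfolding K_def B_def
    proof (intro compact_Int_closed compact_box)
    have "closed {x. nrm n x = 1}" by (intro closed_Collect_eq cont_nrm continuous_on_const)
    then show "closed (nrm n -` {1})" by (simp add: vimage_def)
  qed
  define e0 where "e0 = (\<lambda>i::nat. if i = 0 then (1::complex) else 0)"
  have "nrm n e0 = (\<Sum>a<n. if a = 0 then 1 else 0)" unfolding nrm_def
    by (intro sum.cong refl) (auto simp: e0_def)
  also have "\<dots> = 1" using n0 by (simp add: sum.delta)
  finally have "nrm n e0 = 1" .
  then have "e0 \<in> K" unfolding K_def B_def e0_def using n0 by auto
  then have "K \<noteq> {}" by auto
  from continuous_attains_inf[OF \<open>compact K\<close> this continuous_on_subset[OF cont_Q[of n h] subset_UNIV]]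
  obtain \<phi> where \<phi>K: "\<phi> \<in> K" and \<phi>min: "\<And>y. y \<in> K \<Longrightarrow> Re (Qf n h \<phi>) \<le> Re (Qf n h y)" by metis
  define l0 where "l0 = Re (Qf n h \<phi>)"
  have claim1: "Re (Qf n h f) \<ge> l0 * nrm n f" for f
  proof (cases "nrm n f = 0")
    case True
    then show ?thesis using Qf_zero[of n f h] nrm_zero_iff[of n f] by simp
  next
    case False
    define s where "s = nrm n f"
    have s0: "s > 0" using False nrm_nonneg[of n f] s_def by auto
    define g where "g = (\<lambda>a. if a < n then of_real (1 / sqrt s) * f a else 0)"
    have gnrm: "nrm n g = 1"
    proof -
      have "nrm n g = nrm n (\<lambda>a. of_real (1 / sqrt s) * f a)"
        unfolding nrm_def g_def by (intro sum.cong refl) auto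
      also have "\<dots> = 1" unfolding nrm_scale using s0 s_def by (simp add: power_divide)
      finally show ?thesis .
    qed
    have gB: "g \<in> B" unfolding B_def mem_Collect_eq
    proof (intro allI)
      fix i
      show "g i \<in> (if i < n then cball 0 1 else {0})"
      proof (cases "i < n")
        case True
        have "(cmod (f i))^2 \<le> s" unfolding s_def nrm_def
          using True by (intro member_le_sum) auto
        then have "cmod (f i) \<le> sqrt s" by (simp add: real_le_rsqrt)
        then have "cmod (g i) \<le> 1" unfolding g_def using True s0 by (simp add: norm_mult norm_divide divide_le_eq_1)
        then show ?thesis using True by (simp add: dist_norm)
      qed (simp add: g_def)
    qed
    have "g \<in> K" unfolding K_def using gB gnrm by auto
    then have "l0 \<le> Re (Qf n h g)" using \<phi>min l0_def by auto
    also have "Qf n h g = Qf n h (\<lambda>a. of_real (1 / sqrt s) * f a)"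
      by (rule Qf_cong) (simp add: g_def)
    also have "\<dots> = of_real (1 / s) * Qf n h f" unfolding Qf_scale using s0 by (simp add: power_divide)
    finally have "l0 \<le> Re (Qf n h f) / s" by simp
    then have "l0 * s \<le> Re (Qf n h f)" using s0 by (simp add: pos_le_divide_eq)
    then show ?thesis unfolding s_def .
  qed
  have \<phi>n: "nrm n \<phi> = 1" using \<phi>K K_def by auto
  have "\<forall>a<n. app n (shift h l0) \<phi> a = 0"
  proof (rule psd_zero[OF herm_shift[OF herm]])
    show "Re (Qf n (shift h l0) g) \<ge> 0" for g
      using claim1[of g] unfolding Qf_shift by simp
    show "Re (Qf n (shift h l0) \<phi>) = 0" unfolding Qf_shift \<phi>n l0_def by simp
  qed
  then have ev: "\<forall>a<n. app n h \<phi> a = of_real l0 * \<phi> a"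
  proof (intro allI impI)
    fix a assume z: "\<forall>a<n. app n (shift h l0) \<phi> a = 0" and a: "a < n"
    then have "app n (shift h l0) \<phi> a = 0" by blast
    then show "app n h \<phi> a = l0 * \<phi> a" using app_shift[OF a, of h l0 \<phi>] by simp
  qed
  have "\<exists>a<n. \<phi> a \<noteq> 0" using \<phi>n nrm_zero_iff[of n \<phi>] by auto
  from minE[OF ev this] have El0: "E \<le> l0" by simp
  have ge: "Re (Qf n h f) \<ge> E * nrm n f"
  proof -
    have "E * nrm n f \<le> l0 * nrm n f" using El0 nrm_nonneg[of n f] by (rule mult_right_mono)
    then show ?thesis using claim1[of f] by linarith
  qed
  moreover have "Re (Qf n h f) = E * nrm n f \<longrightarrow> (\<forall>a<n. app n h f a = E * f a)"
  proof
  assume eq: "Re (Qf n h f) = E * nrm n f"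
  have "\<forall>a<n. app n (shift h E) f a = 0"
  proof (rule psd_zero[OF herm_shift[OF herm]])
    show "Re (Qf n (shift h E) g) \<ge> 0" for g
    proof -
      have "E * nrm n g \<le> l0 * nrm n g" using El0 nrm_nonneg[of n g] by (rule mult_right_mono)
      then show ?thesis using claim1[of g] unfolding Qf_shift by simp
    qed
    show "Re (Qf n (shift h E) f) = 0" unfolding Qf_shift using eq by simp
  qed
  then show "\<forall>a<n. app n h f a = E * f a"
  proof (intro allI impI)
    fix a assume a: "a < n" and z: "\<forall>a<n. app n (shift h E) f a = 0"
    then have "app n (shift h E) f a = 0" by blast
    then show "app n h f a = E * f a" using app_shift[OF a, of h E f] by simp
  qed
  qed
  ultimately show ?thesis by (rule conjI)
qed



lemma flip_flip[simp]: "flip_bit k (flip_bit k (b::nat)) = b"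
  by (rule bit_eqI) (auto simp: bit_flip_bit_iff)

lemma flip_neq: "flip_bit k (b::nat) \<noteq> b"
proof
  assume "flip_bit k b = b"
  then have "bit (flip_bit k b) k = bit b k" by simp
  then show False by (simp add: bit_flip_bit_iff)
qed

lemma flip_inj: assumes "flip_bit k (b::nat) = flip_bit l b" shows "k = l"
proof (rule ccontr)
  assume "k \<noteq> l"
  from assms have "bit (flip_bit k b) k = bit (flip_bit l b) k" by simp
  then show False using \<open>k \<noteq> l\<close> by (simp add: bit_flip_bit_iff)
qed

lemma flip_lt: assumes "k < N" "(b::nat) < 2^N" shows "flip_bit k b < 2^N"
proof -
  have "take_bit N b = b" using assms(2) by (simp add: take_bit_nat_eq_self_iff)
  then have "take_bit N (flip_bit k b) = flip_bit k b" using assms(1) by (simp add: take_bit_flip_bit_eq)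
  then show ?thesis by (simp add: take_bit_nat_eq_self_iff)
qed

lemma bit_lt: assumes "(b::nat) < 2^N" "N \<le> k" shows "\<not> bit b k"
proof -
  have "take_bit N b = b" using assms(1) by (simp add: take_bit_nat_eq_self_iff)
  then have "bit b k = bit (take_bit N b) k" by simp
  then show ?thesis using assms(2) by (simp add: bit_take_bit_iff)
qed

lemma hyper_conn:
  assumes P0: "P b0" and b0: "b0 < (2::nat)^N"
    and step: "\<And>b k. b < 2^N \<Longrightarrow> k < N \<Longrightarrow> P b \<Longrightarrow> P (flip_bit k b)"
  shows "c < 2^N \<Longrightarrow> P c"
proof (induction "card {k. k < N \<and> bit c k \<noteq> bit b0 k}" arbitrary: c rule: less_induct)
  case less
  show ?case
  proof (cases "{k. k < N \<and> bit c k \<noteq> bit b0 k} = {}")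
    case True
    have "c = b0"
    proof (rule bit_eqI)
      fix k show "bit c k = bit b0 k"
      proof (cases "k < N")
        case True then show ?thesis using \<open>_ = {}\<close> by auto
      next
        case False then show ?thesis using bit_lt[OF less.prems] bit_lt[OF b0] by auto
      qed
    qed
    then show ?thesis using P0 by simp
  next
    case False
    then obtain k where k: "k < N" "bit c k \<noteq> bit b0 k" by auto
    define c' where "c' = flip_bit k c"
    have c'lt: "c' < 2^N" unfolding c'_def using flip_lt k less.prems by auto
    have "{j. j < N \<and> bit c' j \<noteq> bit b0 j} = {j. j < N \<and> bit c j \<noteq> bit b0 j} - {k}"
      unfolding c'_def using k by (auto simp: bit_flip_bit_iff)
    moreover have "card ({j. j < N \<and> bit c j \<noteq> bit b0 j} - {k}) < card {j. j < N \<and> bit c j \<noteq> bit b0 j}"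
    proof (rule card_Diff1_less)
      show "finite {j. j < N \<and> bit c j \<noteq> bit b0 j}" by simp
      show "k \<in> {j. j < N \<and> bit c j \<noteq> bit b0 j}" using k by simp
    qed
    ultimately have "card {j. j < N \<and> bit c' j \<noteq> bit b0 j} < card {j. j < N \<and> bit c j \<noteq> bit b0 j}"
      by simp
    then have "P c'" using less.hyps[OF _ c'lt] by simp
    then have "P (flip_bit k c')" using step[OF c'lt k(1)] by simp
    then show ?thesis unfolding c'_def by simp
  qed
qed



definition zs :: "nat \<Rightarrow> nat \<Rightarrow> nat \<Rightarrow> real" where
  "zs N i b = (if bit b (N - i) then -1 else 1)"
definition mc :: "nat \<Rightarrow> nat \<Rightarrow> nat \<Rightarrow> real" where
  "mc N a b = (\<Sum>i\<in>{1..<N+1}. if a = flip_bit (N - i) b then 1 else 0)"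
definition Cd :: "nat \<Rightarrow> (nat \<Rightarrow> nat \<Rightarrow> real) \<Rightarrow> nat \<Rightarrow> real" where
  "Cd N J b = (\<Sum>i\<in>{1..<N+1}. \<Sum>j\<in>{i+1..<N+1}. J i j * (zs N i b * zs N j b))"
definition Dg :: "nat \<Rightarrow> real \<Rightarrow> (nat \<Rightarrow> nat \<Rightarrow> real) \<Rightarrow> nat \<Rightarrow> real" where
  "Dg N \<delta> J b = \<delta> * (\<Sum>i\<in>{1..<N+1}. zs N i b) + Cd N J b"

lemma msum_ce:
  assumes "\<forall>A\<in>set As. A \<in> carrier_mat n n"
  shows "msum n As \<in> carrier_mat n n \<and> (\<forall>a<n. \<forall>b<n. msum n As $$ (a,b) = sum_list (map (\<lambda>A. A $$ (a,b)) As))"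
  using assms by (induction As) (auto simp: msum_def)

lemma sx_c: "sigma_x N i \<in> carrier_mat (2^N) (2^N)" by (simp add: sigma_x_def)
lemma sz_c: "sigma_z N i \<in> carrier_mat (2^N) (2^N)" by (simp add: sigma_z_def)

lemma szz_c: "sigma_z N i * sigma_z N j \<in> carrier_mat (2^N) (2^N)"
  using mult_carrier_mat[OF sz_c sz_c] .

lemma dims[simp]: "dim_row (sigma_x N i) = 2^N" "dim_col (sigma_x N i) = 2^N"
  "dim_row (sigma_z N i) = 2^N" "dim_col (sigma_z N i) = 2^N"
  "dim_row (sigma_z N i * sigma_z N j) = 2^N" "dim_col (sigma_z N i * sigma_z N j) = 2^N"
  using sx_c[of N i] sz_c[of N i] szz_c[of N i j] by auto

lemma sx_e: "a < 2^N \<Longrightarrow> b < 2^N \<Longrightarrow> sigma_x N i $$ (a,b) = (if a = flip_bit (N-i) b then 1 else 0)"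
  by (simp add: sigma_x_def site_bit_def)
lemma sz_e: "a < 2^N \<Longrightarrow> b < 2^N \<Longrightarrow> sigma_z N i $$ (a,b) = (if a = b then of_real (zs N i b) else 0)"
  by (simp add: sigma_z_def site_bit_def zs_def)

lemma szz_e:
  assumes a: "a < 2^N" and b: "b < 2^N"
  shows "(sigma_z N i * sigma_z N j) $$ (a,b) = (if a = b then of_real (zs N i b * zs N j b) else 0)"
proof -
  have di: "dim_row (sigma_z N i) = 2^N" "dim_col (sigma_z N i) = 2^N" using sz_c[of N i] by auto
  have dj: "dim_row (sigma_z N j) = 2^N" "dim_col (sigma_z N j) = 2^N" using sz_c[of N j] by auto
  have "(sigma_z N i * sigma_z N j) $$ (a,b) = scalar_prod (row (sigma_z N i) a) (col (sigma_z N j) b)"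
    using a b di dj by (subst index_mult_mat) auto
  also have "\<dots> = (\<Sum>k\<in>{0..<2^N}. row (sigma_z N i) a $ k * col (sigma_z N j) b $ k)"
    unfolding scalar_prod_def using dj by simp
  also have "\<dots> = (\<Sum>k\<in>{0..<2^N}. sigma_z N i $$ (a,k) * sigma_z N j $$ (k,b))"
    using a b di dj by (intro sum.cong refl) simp
  also have "\<dots> = (\<Sum>k\<in>{0..<2^N}. if k = a then (if a = b then of_real (zs N i b * zs N j b) else 0) else 0)"
    by (intro sum.cong refl) (auto simp: sz_e a b)
  also have "\<dots> = (if a = b then of_real (zs N i b * zs N j b) else 0)" using a by (simp add: sum.delta)
  finally show ?thesis .
qed

lemma sum_list_concat_map:
  "sum_list (map f (concat (map (\<lambda>i. map (g i) (ys i)) xs))) = sum_list (map (\<lambda>i. sum_list (map (\<lambda>j. f (g i j)) (ys i))) xs)"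
  by (induction xs) (auto simp: o_def)

lemma upt_sum: "sum_list (map f [m..<n]) = sum f {m..<n}"
  by (simp add: sum_set_upt_conv_sum_list_nat[symmetric])

lemma H_ce:
  fixes N :: nat and \<Omega> \<delta> :: real and J :: "nat \<Rightarrow> nat \<Rightarrow> real"
  defines "n \<equiv> (2::nat)^N"
  shows "hamiltonian N \<Omega> \<delta> J \<in> carrier_mat n n"
    and "a < n \<Longrightarrow> b < n \<Longrightarrow> hamiltonian N \<Omega> \<delta> J $$ (a,b) = of_real (\<Omega> * mc N a b + (if a = b then Dg N \<delta> J b else 0))"
proof -
  define X where "X = msum n (map (\<lambda>i. complex_of_real \<Omega> \<cdot>\<^sub>m sigma_x N i) [1..<N+1])"
  define Z where "Z = msum n (map (\<lambda>i. complex_of_real \<delta> \<cdot>\<^sub>m sigma_z N i) [1..<N+1])"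
  define C where "C = msum n (concat (map (\<lambda>i. map (\<lambda>j. complex_of_real (J i j) \<cdot>\<^sub>m (sigma_z N i * sigma_z N j))
                                    [i+1..<N+1]) [1..<N+1]))"
  have H: "hamiltonian N \<Omega> \<delta> J = X + Z + C" unfolding hamiltonian_def X_def Z_def C_def n_def by simp
  have X: "X \<in> carrier_mat n n \<and> (\<forall>a<n. \<forall>b<n. X $$ (a,b) = sum_list (map (\<lambda>A. A $$ (a,b)) (map (\<lambda>i. complex_of_real \<Omega> \<cdot>\<^sub>m sigma_x N i) [1..<N+1])))"
    unfolding X_def by (rule msum_ce) (auto simp: n_def sx_c)
  have Z: "Z \<in> carrier_mat n n \<and> (\<forall>a<n. \<forall>b<n. Z $$ (a,b) = sum_list (map (\<lambda>A. A $$ (a,b)) (map (\<lambda>i. complex_of_real \<delta> \<cdot>\<^sub>m sigma_z N i) [1..<N+1])))"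
    unfolding Z_def by (rule msum_ce) (auto simp: n_def sz_c)
  have C: "C \<in> carrier_mat n n \<and> (\<forall>a<n. \<forall>b<n. C $$ (a,b) = sum_list (map (\<lambda>A. A $$ (a,b)) (concat (map (\<lambda>i. map (\<lambda>j. complex_of_real (J i j) \<cdot>\<^sub>m (sigma_z N i * sigma_z N j))
                                    [i+1..<N+1]) [1..<N+1]))))"
    unfolding C_def by (rule msum_ce) (auto simp: n_def szz_c)
  show "hamiltonian N \<Omega> \<delta> J \<in> carrier_mat n n" using X Z C H by simp
  assume a: "a < n" and b: "b < n"
  have Xe: "X $$ (a,b) = of_real (\<Omega> * mc N a b)"
  proof -
    have "X $$ (a,b) = (\<Sum>i\<in>{1..<N+1}. (complex_of_real \<Omega> \<cdot>\<^sub>m sigma_x N i) $$ (a,b))"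
      using X a b by (simp only: map_map o_def upt_sum)
    also have "\<dots> = (\<Sum>i\<in>{1..<N+1}. of_real \<Omega> * (if a = flip_bit (N-i) b then 1 else 0))"
      using a b sx_c[of N] by (intro sum.cong refl) (simp add: sx_e n_def)
    also have "\<dots> = of_real (\<Omega> * mc N a b)" unfolding mc_def of_real_mult of_real_sum sum_distrib_left
      by (intro sum.cong refl) simp
    finally show ?thesis .
  qed
  have Ze: "Z $$ (a,b) = of_real (if a = b then \<delta> * (\<Sum>i\<in>{1..<N+1}. zs N i b) else 0)"
  proof -
    have "Z $$ (a,b) = (\<Sum>i\<in>{1..<N+1}. (complex_of_real \<delta> \<cdot>\<^sub>m sigma_z N i) $$ (a,b))"
      using Z a b by (simp only: map_map o_def upt_sum)
    also have "\<dots> = (\<Sum>i\<in>{1..<N+1}. of_real \<delta> * (if a = b then of_real (zs N i b) else 0))"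
      using a b sz_c[of N] by (intro sum.cong refl) (simp add: sz_e n_def)
    also have "\<dots> = of_real (if a = b then \<delta> * (\<Sum>i\<in>{1..<N+1}. zs N i b) else 0)"
      by (cases "a = b") (simp_all only: simp_thms if_True if_False of_real_mult of_real_sum sum_distrib_left mult_zero_right sum.neutral_const of_real_0)
    finally show ?thesis .
  qed
  have Ce: "C $$ (a,b) = of_real (if a = b then Cd N J b else 0)"
  proof -
    have "C $$ (a,b) = (\<Sum>i\<in>{1..<N+1}. \<Sum>j\<in>{i+1..<N+1}. (complex_of_real (J i j) \<cdot>\<^sub>m (sigma_z N i * sigma_z N j)) $$ (a,b))"
      using C a b by (simp only: sum_list_concat_map upt_sum)
    also have "\<dots> = (\<Sum>i\<in>{1..<N+1}. \<Sum>j\<in>{i+1..<N+1}. of_real (J i j) * (if a = b then of_real (zs N i b * zs N j b) else 0))"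
      using a b szz_c[of N] by (intro sum.cong refl) (simp add: szz_e n_def del: index_mult_mat)
    also have "\<dots> = of_real (if a = b then Cd N J b else 0)"
      unfolding Cd_def by (cases "a = b") (simp_all only: simp_thms if_True if_False of_real_mult of_real_sum sum_distrib_left mult_zero_right sum.neutral_const of_real_0)
    finally show ?thesis .
  qed
  show "hamiltonian N \<Omega> \<delta> J $$ (a,b) = of_real (\<Omega> * mc N a b + (if a = b then Dg N \<delta> J b else 0))"
  proof -
    have cX: "X \<in> carrier_mat n n" and cZ: "Z \<in> carrier_mat n n" and cC: "C \<in> carrier_mat n n"
      using X Z C by auto
    have "hamiltonian N \<Omega> \<delta> J $$ (a,b) = X $$ (a,b) + Z $$ (a,b) + C $$ (a,b)"
      unfolding H using cX cZ cC a b by (simp del: index_mult_mat)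
    also have "\<dots> = of_real (\<Omega> * mc N a b + (if a = b then Dg N \<delta> J b else 0))"
      unfolding Xe Ze Ce Dg_def by (cases "a = b") simp_all
    finally show ?thesis .
  qed
qed




lemma zs_flip:
  assumes "i \<in> {1..<N+1}" "k \<in> {1..<N+1}"
  shows "zs N i (flip_bit (N - k) b) = (if i = k then - zs N i b else zs N i b)"
proof -
  have "(N - k = N - i) \<longleftrightarrow> i = k" using assms by auto
  then show ?thesis unfolding zs_def by (auto simp: bit_flip_bit_iff)
qed

lemma zs_0: "zs N i 0 = 1" unfolding zs_def by simp

lemma fourier:
  assumes c: "\<forall>a<(2::nat)^N. Cd N K a = c" and pq: "1 \<le> p" "p < q" "q \<le> N"
  shows "K p q = 0"
proof -
  define b1 where "b1 = flip_bit (N - p) (0::nat)"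
  define b2 where "b2 = flip_bit (N - q) (0::nat)"
  define b3 where "b3 = flip_bit (N - q) b1"
  have lt0: "(0::nat) < 2^N" by simp
  have lt1: "b1 < 2^N" unfolding b1_def using pq by (intro flip_lt) auto
  have lt2: "b2 < 2^N" unfolding b2_def using pq by (intro flip_lt) auto
  have lt3: "b3 < 2^N" unfolding b3_def using pq lt1 by (intro flip_lt) auto
  have pr: "p \<in> {1..<N+1}" "q \<in> {1..<N+1}" using pq by auto
  have z1: "zs N i b1 = (if i = p then -1 else 1)" if "i \<in> {1..<N+1}" for i
    using zs_flip[OF that pr(1), of 0, folded b1_def] by (simp add: zs_0)
  have z2: "zs N i b2 = (if i = q then -1 else 1)" if "i \<in> {1..<N+1}" for i
    using zs_flip[OF that pr(2), of 0, folded b2_def] by (simp add: zs_0)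
  have z3: "zs N i b3 = (if i = p then -1 else 1) * (if i = q then -1 else 1)" if "i \<in> {1..<N+1}" for i
    using zs_flip[OF that pr(2), of b1, folded b3_def] z1[OF that] pq by auto
  have "Cd N K 0 - Cd N K b1 - Cd N K b2 + Cd N K b3 =
     (\<Sum>i\<in>{1..<N+1}. \<Sum>j\<in>{i+1..<N+1}. K i j * (zs N i 0 * zs N j 0 - zs N i b1 * zs N j b1
         - zs N i b2 * zs N j b2 + zs N i b3 * zs N j b3))"
    unfolding Cd_def by (simp add: sum.distrib sum_subtractf algebra_simps)
  also have "\<dots> = (\<Sum>i\<in>{1..<N+1}. \<Sum>j\<in>{i+1..<N+1}. (if i = p \<and> j = q then 4 * K p q else 0))"
  proof (intro sum.cong refl)
    fix i j assume i: "i \<in> {1..<N+1}" and j: "j \<in> {i+1..<N+1}"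
    have j': "j \<in> {1..<N+1}" using i j by auto
    show "K i j * (zs N i 0 * zs N j 0 - zs N i b1 * zs N j b1 - zs N i b2 * zs N j b2 + zs N i b3 * zs N j b3)
       = (if i = p \<and> j = q then 4 * K p q else 0)"
      unfolding zs_0 z1[OF i] z2[OF i] z3[OF i] z1[OF j'] z2[OF j'] z3[OF j']
      using i j pq by auto
  qed
  also have "\<dots> = (\<Sum>i\<in>{1..<N+1}. if i = p then 4 * K p q else 0)"
    by (intro sum.cong refl) (use pq in \<open>auto simp: sum.delta'\<close>)
  also have "\<dots> = 4 * K p q" using pr by (simp add: sum.delta')
  finally have "Cd N K 0 - Cd N K b1 - Cd N K b2 + Cd N K b3 = 4 * K p q" .
  moreover have "Cd N K 0 - Cd N K b1 - Cd N K b2 + Cd N K b3 = 0"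
    using c lt0 lt1 lt2 lt3 by simp
  ultimately show ?thesis by simp
qed


lemma mv_e:
  assumes "A \<in> carrier_mat n n" "v \<in> carrier_vec n" "a < n"
  shows "(A *\<^sub>v v) $ a = app n (\<lambda>a b. A $$ (a,b)) (\<lambda>i. v $ i) a"
  unfolding app_def using assms by (auto simp: scalar_prod_def atLeast0LessThan intro!: sum.cong)

lemma Qf_app: "Qf n h f = (\<Sum>a<n. cnj (f a) * app n h f a)"
  unfolding Qf_def app_def by (simp add: sum_distrib_left mult.assoc)

lemma expect_Q:
  assumes A: "A \<in> carrier_mat n n" and v: "v \<in> carrier_vec n"
  shows "expect A v = Qf n (\<lambda>a b. A $$ (a,b)) (\<lambda>i. v $ i)"
proof -
  have "expect A v = (\<Sum>i\<in>{0..<n}. (A *\<^sub>v v) $ i * conjugate v $ i)"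
    unfolding expect_def scalar_prod_def using v by simp
  also have "\<dots> = (\<Sum>a<n. cnj (v $ a) * app n (\<lambda>a b. A $$ (a,b)) (\<lambda>i. v $ i) a)"
    using A v by (auto simp: atLeast0LessThan mv_e[OF A v] mult.commute simp del: index_mult_mat_vec intro!: sum.cong)
  finally show ?thesis unfolding Qf_app .
qed

lemma cnorm:
  assumes v: "v \<in> carrier_vec n"
  shows "v \<bullet>c v = of_real (nrm n (\<lambda>i. v $ i))"
proof -
  have "v \<bullet>c v = (\<Sum>i\<in>{0..<n}. v $ i * conjugate v $ i)"
    unfolding scalar_prod_def using v by simp
  also have "\<dots> = (\<Sum>a<n. cnj (v $ a) * v $ a)"
    using v by (auto simp: atLeast0LessThan intro!: sum.cong)
  finally show ?thesis unfolding nrm_eq .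
qed

lemma gs_coords:
  assumes A: "A \<in> carrier_mat n n" and gs: "ground_state A \<psi>"
  obtains E where "\<psi> \<in> carrier_vec n" "nrm n (\<lambda>i. \<psi> $ i) = 1"
    "\<forall>a<n. app n (\<lambda>a b. A $$ (a,b)) (\<lambda>i. \<psi> $ i) a = of_real E * \<psi> $ a"
    "\<And>l g. (\<forall>a<n. app n (\<lambda>a b. A $$ (a,b)) g a = l * g a) \<Longrightarrow> (\<exists>a<n. g a \<noteq> 0) \<Longrightarrow> E \<le> Re l"
proof -
  from gs obtain E where n1: "\<psi> \<bullet>c \<psi> = 1" and ev: "eigenvector A \<psi> (complex_of_real E)"
    and mn: "\<forall>\<mu>. eigenvalue A \<mu> \<longrightarrow> E \<le> Re \<mu>"
    unfolding ground_state_def by blast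
  have dr: "dim_row A = n" using A by auto
  have v: "\<psi> \<in> carrier_vec n" and Av: "A *\<^sub>v \<psi> = complex_of_real E \<cdot>\<^sub>v \<psi>"
    using ev unfolding eigenvector_def dr by auto
  have "nrm n (\<lambda>i. \<psi> $ i) = 1" using n1 cnorm[OF v] by simp
  moreover have "\<forall>a<n. app n (\<lambda>a b. A $$ (a,b)) (\<lambda>i. \<psi> $ i) a = of_real E * \<psi> $ a"
  proof (intro allI impI)
    fix a assume a: "a < n"
    have "app n (\<lambda>a b. A $$ (a,b)) (\<lambda>i. \<psi> $ i) a = (A *\<^sub>v \<psi>) $ a" using mv_e[OF A v a] by simp
    also have "\<dots> = of_real E * \<psi> $ a" unfolding Av using a v by simp
    finally show "app n (\<lambda>a b. A $$ (a,b)) (\<lambda>i. \<psi> $ i) a = of_real E * \<psi> $ a" .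
  qed
  moreover have "E \<le> Re l" if h1: "\<forall>a<n. app n (\<lambda>a b. A $$ (a,b)) g a = l * g a" and h2: "\<exists>a<n. g a \<noteq> 0" for l g
  proof -
    define w where "w = vec n g"
    have w: "w \<in> carrier_vec n" unfolding w_def by simp
    have "A *\<^sub>v w = l \<cdot>\<^sub>v w"
    proof (rule eq_vecI)
      fix a assume "a < dim_vec (l \<cdot>\<^sub>v w)"
      then have a: "a < n" using w by simp
      have "(A *\<^sub>v w) $ a = app n (\<lambda>a b. A $$ (a,b)) (\<lambda>i. w $ i) a" using mv_e[OF A w a] .
      also have "\<dots> = app n (\<lambda>a b. A $$ (a,b)) g a" unfolding app_def w_def by (intro sum.cong refl) simp
      also have "\<dots> = (l \<cdot>\<^sub>v w) $ a" using h1 a w_def by simp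
      finally show "(A *\<^sub>v w) $ a = (l \<cdot>\<^sub>v w) $ a" .
    qed (use A w in simp)
    moreover have "w \<noteq> 0\<^sub>v n"
    proof
      assume "w = 0\<^sub>v n"
      then have "\<forall>a<n. g a = 0" unfolding w_def by (metis index_vec index_zero_vec(1))
      then show False using h2 by blast
    qed
    ultimately have "eigenvector A w l" unfolding eigenvector_def dr using w by simp
    then have "eigenvalue A l" unfolding eigenvalue_def by blast
    then show ?thesis using mn by blast
  qed
  ultimately show ?thesis using that v by blast
qed


definition psg :: "nat \<Rightarrow> nat \<Rightarrow> real" where
  "psg N b = (\<Prod>i\<in>{1..<N+1}. zs N i b)"

lemma zs_sq: "zs N i b * zs N i b = 1" unfolding zs_def by simp

lemma psg_sq: "psg N b * psg N b = 1"
  unfolding psg_def prod.distrib[symmetric] zs_sq by simp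

lemma psg_flip:
  assumes k: "k \<in> {1..<N+1}"
  shows "psg N (flip_bit (N - k) b) = - psg N b"
proof -
  have "psg N (flip_bit (N - k) b) = (\<Prod>i\<in>{1..<N+1}. if i = k then - zs N i b else zs N i b)"
    unfolding psg_def by (intro prod.cong refl) (use zs_flip k in auto)
  also have "\<dots> = (- zs N k b) * (\<Prod>i\<in>{1..<N+1} - {k}. if i = k then - zs N i b else zs N i b)"
    using k by (subst prod.remove[of _ k]) auto
  also have "(\<Prod>i\<in>{1..<N+1} - {k}. if i = k then - zs N i b else zs N i b) = (\<Prod>i\<in>{1..<N+1} - {k}. zs N i b)"
    by (intro prod.cong refl) auto
  also have "psg N b = zs N k b * (\<Prod>i\<in>{1..<N+1} - {k}. zs N i b)"
    unfolding psg_def using k by (subst prod.remove[of _ k]) auto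
  ultimately show ?thesis by simp
qed

lemma mc_nonneg: "mc N a b \<ge> 0" unfolding mc_def by (intro sum_nonneg) auto

lemma mc_pos: assumes "mc N a b \<noteq> 0" shows "\<exists>i\<in>{1..<N+1}. a = flip_bit (N - i) b"
proof (rule ccontr)
  assume "\<not> ?thesis"
  then have "mc N a b = 0" unfolding mc_def by (intro sum.neutral) auto
  with assms show False by simp
qed

lemma mc_sym: "mc N a b = mc N b a"
  unfolding mc_def by (intro sum.cong refl) (metis flip_flip)

lemma mc_diag: "mc N a a = 0"
  unfolding mc_def using flip_neq by (metis (mono_tags, lifting) sum.neutral)

lemma mc_flip:
  assumes k: "k < N"
  shows "mc N b (flip_bit k b) \<ge> 1"
proof -
  have i: "N - k \<in> {1..<N+1}" using k by auto
  have "(if b = flip_bit (N - (N - k)) (flip_bit k b) then 1 else 0::real) = 1"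
    using k by simp
  moreover have "(if b = flip_bit (N - (N - k)) (flip_bit k b) then 1 else 0::real) \<le> mc N b (flip_bit k b)"
    unfolding mc_def by (rule member_le_sum[OF i]) auto
  ultimately show ?thesis by simp
qed

lemma mc_sign: "mc N a b \<noteq> 0 \<Longrightarrow> psg N a = - psg N b"
  using mc_pos psg_flip by metis

lemma re_cnj_bound: "Re (cnj x * y) \<ge> - (cmod x * cmod y)"
proof -
  have "\<bar>Re (cnj x * y)\<bar> \<le> cmod (cnj x * y)" by (rule abs_Re_le_cmod)
  also have "\<dots> = cmod x * cmod y" by (simp add: norm_mult)
  finally show ?thesis by linarith
qed

lemma pf:
  fixes N :: nat and \<Omega> E :: real and D :: "nat \<Rightarrow> real" and h f
  defines "n \<equiv> (2::nat)^N"
  assumes \<Omega>: "\<Omega> \<noteq> 0"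
    and hd: "\<And>a b. a < n \<Longrightarrow> b < n \<Longrightarrow> h a b = of_real (\<Omega> * mc N a b + (if a = b then D b else 0))"
    and herm: "herm n h"
    and minE: "\<And>l g. (\<forall>a<n. app n h g a = l * g a) \<Longrightarrow> (\<exists>a<n. g a \<noteq> 0) \<Longrightarrow> E \<le> Re l"
    and nf: "nrm n f = 1" and ev: "\<forall>a<n. app n h f a = of_real E * f a"
  shows "\<forall>a<n. f a \<noteq> 0"
proof -
  have n0: "n > 0" unfolding n_def by simp
  define \<sigma> where "\<sigma> a = (if \<Omega> > 0 then psg N a else 1)" for a
  have \<sigma>sq: "\<sigma> a * \<sigma> a = 1" for a unfolding \<sigma>_def using psg_sq by auto
  have \<sigma>abs: "\<bar>\<sigma> a\<bar> = 1" for a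
  proof -
    have "(\<sigma> a)^2 = 1" using \<sigma>sq[of a] by (simp add: power2_eq_square)
    then show ?thesis by (simp add: abs_square_eq_1)
  qed
  define \<phi> where "\<phi> a = complex_of_real (\<sigma> a * cmod (f a))" for a
  have c\<phi>: "cmod (\<phi> a) = cmod (f a)" for a
    unfolding \<phi>_def norm_of_real by (simp add: abs_mult \<sigma>abs)
  have n\<phi>: "nrm n \<phi> = 1" using nf unfolding nrm_def c\<phi> .
  have QE: "Qf n h f = of_real E"
  proof -
    have "Qf n h f = (\<Sum>a<n. of_real E * (cnj (f a) * f a))"
      unfolding Qf_app using ev by (intro sum.cong refl) auto
    also have "\<dots> = of_real E * of_real (nrm n f)" unfolding nrm_eq sum_distrib_left ..
    finally show ?thesis using nf by simp
  qed
  have key: "\<Omega> * \<sigma> a * \<sigma> b = - \<bar>\<Omega>\<bar>" if "mc N a b \<noteq> 0" for a b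
  proof (cases "\<Omega> > 0")
    case True
    have "\<sigma> a * \<sigma> b = - (psg N b * psg N b)" unfolding \<sigma>_def using True mc_sign[OF that] by simp
    then have "\<sigma> a * \<sigma> b = - 1" using psg_sq[of N b] by simp
    then have "\<Omega> * \<sigma> a * \<sigma> b = - \<Omega>" by (simp add: mult.assoc)
    then show ?thesis using True by simp
  next
    case False
    then show ?thesis unfolding \<sigma>_def using \<Omega> by simp
  qed
  have trm: "Re (cnj (\<phi> a) * h a b * \<phi> b) \<le> Re (cnj (f a) * h a b * f b)" if a: "a < n" and b: "b < n" for a b
  proof (cases "a = b")
    case True
    have "Re (cnj (\<phi> a) * h a b * \<phi> b) = D b * (\<sigma> b * \<sigma> b) * (cmod (f b) * cmod (f b))"
      unfolding hd[OF a b] \<phi>_def using True by (simp add: mc_diag)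
    also have "\<dots> = D b * (cmod (f b))^2" by (simp add: \<sigma>sq power2_eq_square)
    also have "\<dots> = Re (cnj (f a) * h a b * f b)"
      unfolding cmod_power2 hd[OF a b] using True by (simp add: mc_diag algebra_simps power2_eq_square)
    finally show ?thesis by simp
  next
    case False
    have lhs: "Re (cnj (\<phi> a) * h a b * \<phi> b) = (\<Omega> * \<sigma> a * \<sigma> b) * mc N a b * (cmod (f a) * cmod (f b))"
      unfolding hd[OF a b] \<phi>_def using False by simp
    have rhs: "Re (cnj (f a) * h a b * f b) = \<Omega> * mc N a b * Re (cnj (f a) * f b)"
      unfolding hd[OF a b] using False by (simp add: algebra_simps)
    show ?thesis
    proof (cases "mc N a b = 0")
      case True then show ?thesis using lhs rhs by simp
    next
      case mc: False
      have "\<Omega> * mc N a b * Re (cnj (f a) * f b) \<ge> - \<bar>\<Omega>\<bar> * mc N a b * (cmod (f a) * cmod (f b))"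
      proof -
        have m: "mc N a b \<ge> 0" by (rule mc_nonneg)
        have "\<bar>\<Omega> * mc N a b * Re (cnj (f a) * f b)\<bar> \<le> \<bar>\<Omega>\<bar> * mc N a b * (cmod (f a) * cmod (f b))"
        proof -
          have "\<bar>Re (cnj (f a) * f b)\<bar> \<le> cmod (f a) * cmod (f b)"
            using abs_Re_le_cmod[of "cnj (f a) * f b"] by (simp add: norm_mult)
          then show ?thesis using m by (simp add: abs_mult mult_left_mono mult.assoc)
        qed
        then show ?thesis by linarith
      qed
      then show ?thesis using lhs rhs key[OF mc] by simp
    qed
  qed
  have "Re (Qf n h \<phi>) \<le> Re (Qf n h f)"
    unfolding Qf_def Re_sum by (intro sum_mono) (use trm in auto)
  then have le: "Re (Qf n h \<phi>) \<le> E" using QE by simp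
  have var: "E * nrm n \<phi> \<le> Re (Qf n h \<phi>) \<and> (Re (Qf n h \<phi>) = E * nrm n \<phi> \<longrightarrow> (\<forall>a<n. app n h \<phi> a = E * \<phi> a))"
    by (rule variational[OF herm n0 minE]) auto
  then have ev\<phi>: "\<forall>a<n. app n h \<phi> a = E * \<phi> a" using le n\<phi> by auto
  have prp: "f (flip_bit k b) = 0" if b: "b < n" and k: "k < N" and fb: "f b = 0" for b k
  proof -
    define \<kappa> where "\<kappa> = (if \<Omega> > 0 then - \<Omega> * psg N b else \<Omega>)"
    have \<kappa>0: "\<kappa> \<noteq> 0" unfolding \<kappa>_def using \<Omega> psg_sq[of N b] by auto
    have \<phi>b: "\<phi> b = 0" unfolding \<phi>_def using fb by simp
    have "app n h \<phi> b = 0" using ev\<phi> b \<phi>b by simp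
    moreover have "app n h \<phi> b = (\<Sum>a<n. of_real (\<kappa> * (mc N b a * cmod (f a))))"
      unfolding app_def
    proof (intro sum.cong refl)
      fix a assume "a \<in> {..<n}"
      then have a: "a < n" by simp
      show "h b a * \<phi> a = of_real (\<kappa> * (mc N b a * cmod (f a)))"
      proof (cases "mc N b a = 0")
        case True
        then show ?thesis unfolding hd[OF b a] using \<phi>b by auto
      next
        case False
        then have "b \<noteq> a" using mc_diag by metis
        moreover have "\<Omega> * \<sigma> a = \<kappa>"
          unfolding \<sigma>_def \<kappa>_def using mc_sign[OF False] by simp
        ultimately show ?thesis unfolding hd[OF b a] \<phi>_def
          by (simp add: mult.commute mult.left_commute) (metis mult.assoc of_real_mult)
      qed
    qed
    ultimately have "complex_of_real (\<Sum>a<n. \<kappa> * (mc N b a * cmod (f a))) = 0"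
      by (simp only: of_real_sum)
    then have "(\<Sum>a<n. \<kappa> * (mc N b a * cmod (f a))) = 0" by (simp only: of_real_eq_0_iff)
    then have "(\<Sum>a<n. mc N b a * cmod (f a)) = 0" using \<kappa>0 by (simp add: sum_distrib_left[symmetric])
    then have all0: "\<forall>a\<in>{..<n}. mc N b a * cmod (f a) = 0"
      by (subst sum_nonneg_eq_0_iff[symmetric]) (auto intro: mult_nonneg_nonneg mc_nonneg)
    have fl: "flip_bit k b < n" unfolding n_def using flip_lt k b n_def by simp
    have "mc N b (flip_bit k b) * cmod (f (flip_bit k b)) = 0" using all0 fl by simp
    moreover have "mc N b (flip_bit k b) \<ge> 1" using mc_flip[OF k] .
    ultimately show ?thesis by simp
  qed
  show ?thesis
  proof (rule ccontr)
    assume "\<not> (\<forall>a<n. f a \<noteq> 0)"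
    then obtain b0 where b0: "b0 < n" "f b0 = 0" by auto
    have "\<forall>c<n. f c = 0"
      using hyper_conn[of "\<lambda>c. f c = 0" b0 N] b0 prp unfolding n_def by blast
    then have "nrm n f = 0" using nrm_zero_iff by blast
    then show False using nf by simp
  qed
qed


lemma cnj_sq: "cnj z * z = complex_of_real ((cmod z)^2)"
  by (subst complex_norm_square) (rule mult.commute)

lemma Qf_diag:
  assumes "\<And>a b. a < n \<Longrightarrow> b < n \<Longrightarrow> h a b = (if a = b then of_real (g b) else 0)"
  shows "Qf n h f = of_real (\<Sum>a<n. g a * (cmod (f a))^2)"
proof -
  have "Qf n h f = (\<Sum>a<n. \<Sum>b<n. if b = a then of_real (g a) * (cnj (f a) * f a) else 0)"
    unfolding Qf_def using assms by (intro sum.cong refl) auto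
  also have "\<dots> = (\<Sum>a<n. of_real (g a) * (cnj (f a) * f a))"
    by (intro sum.cong refl) (simp add: sum.delta)
  also have "\<dots> = (\<Sum>a<n. of_real (g a * (cmod (f a))^2))"
    by (intro sum.cong refl) (simp only: cnj_sq of_real_mult)
  finally show ?thesis by (simp only: of_real_sum)
qed

lemma Qf_ev: assumes "\<forall>a<n. app n h f a = of_real E * f a" shows "Qf n h f = of_real (E * nrm n f)"
proof -
  have "Qf n h f = (\<Sum>a<n. of_real E * (cnj (f a) * f a))"
    unfolding Qf_app using assms by (intro sum.cong refl) auto
  also have "\<dots> = (\<Sum>a<n. of_real (E * (cmod (f a))^2))"
    by (intro sum.cong refl) (simp only: cnj_sq of_real_mult)
  finally show ?thesis unfolding nrm_def sum_distrib_left by (simp only: of_real_sum)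
qed

lemma Qf_sub: "Qf n (\<lambda>a b. h1 a b - h2 a b) f = Qf n h1 f - Qf n h2 f"
  unfolding Qf_def by (simp add: algebra_simps sum_subtractf)

lemma app_sub: "app n (\<lambda>a b. h1 a b - h2 a b) f a = app n h1 f a - app n h2 f a"
  unfolding app_def by (simp add: algebra_simps sum_subtractf)

lemma app_diag:
  assumes "\<And>a b. a < n \<Longrightarrow> b < n \<Longrightarrow> h a b = (if a = b then of_real (g b) else 0)" and a: "a < n"
  shows "app n h f a = of_real (g a) * f a"
proof -
  have "app n h f a = (\<Sum>b<n. if a = b then of_real (g a) * f a else 0)"
    unfolding app_def using assms by (intro sum.cong refl) auto
  also have "\<dots> = of_real (g a) * f a" using a by (simp add: sum.delta)
  finally show ?thesis .
qed

lemma H_herm: "herm (2^N) (\<lambda>a b. hamiltonian N \<Omega> \<delta> J $$ (a,b))"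
  unfolding herm_def
proof (intro allI impI)
  fix a b assume a: "a < (2::nat)^N" and b: "b < (2::nat)^N"
  show "hamiltonian N \<Omega> \<delta> J $$ (a,b) = cnj (hamiltonian N \<Omega> \<delta> J $$ (b,a))"
    unfolding H_ce(2)[OF a b] H_ce(2)[OF b a] complex_cnj_complex_of_real
    using mc_sym[of N a b] by (cases "a = b") simp_all
qed

lemma Cd_sub: "Cd N J1 a - Cd N J2 a = Cd N (\<lambda>i j. J1 i j - J2 i j) a"
  by (simp only: Cd_def sum_subtractf[symmetric] left_diff_distrib)

lemma spin_eq: "spin_z hbar N i * spin_z hbar N j = complex_of_real (hbar / 2) \<cdot>\<^sub>m (complex_of_real (hbar / 2) \<cdot>\<^sub>m (sigma_z N i * sigma_z N j))"
proof -
  let ?c = "complex_of_real (hbar / 2)"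
  have "spin_z hbar N i * spin_z hbar N j = ?c \<cdot>\<^sub>m (sigma_z N i * (?c \<cdot>\<^sub>m sigma_z N j))"
    unfolding spin_z_def by (rule mult_smult_assoc_mat[OF sz_c smult_carrier_mat[OF sz_c]])
  also have "\<dots> = ?c \<cdot>\<^sub>m (?c \<cdot>\<^sub>m (sigma_z N i * sigma_z N j))"
    by (subst mult_smult_distrib[OF sz_c sz_c]) rule
  finally show ?thesis .
qed

lemma spin_c: "spin_z hbar N i * spin_z hbar N j \<in> carrier_mat (2^N) (2^N)"
  unfolding spin_eq by (simp add: szz_c)

lemma spin_e:
  assumes a: "a < 2^N" and b: "b < 2^N"
  shows "(spin_z hbar N i * spin_z hbar N j) $$ (a,b) = (if a = b then of_real ((hbar/2)^2 * (zs N i b * zs N j b)) else 0)"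
  unfolding spin_eq using a b by (simp add: szz_e power2_eq_square del: index_mult_mat)

definition corr :: "nat \<Rightarrow> (nat \<Rightarrow> complex) \<Rightarrow> nat \<Rightarrow> nat \<Rightarrow> real" where
  "corr N f i j = (\<Sum>a<2^N. zs N i a * zs N j a * (cmod (f a))^2)"

lemma correlation_eq:
  assumes v: "\<psi> \<in> carrier_vec (2^N)"
  shows "correlation hbar N \<psi> i j = of_real ((hbar/2)^2 * corr N (\<lambda>k. \<psi> $ k) i j)"
proof -
  have "correlation hbar N \<psi> i j = Qf (2^N) (\<lambda>a b. (spin_z hbar N i * spin_z hbar N j) $$ (a,b)) (\<lambda>k. \<psi> $ k)"
    unfolding correlation_def by (rule expect_Q[OF spin_c v])
  also have "\<dots> = of_real (\<Sum>a<2^N. ((hbar/2)^2 * (zs N i a * zs N j a)) * (cmod (\<psi> $ a))^2)"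
    by (rule Qf_diag) (simp add: spin_e)
  also have "\<dots> = of_real ((hbar/2)^2 * corr N (\<lambda>k. \<psi> $ k) i j)"
    unfolding corr_def by (simp add: sum_distrib_left mult.assoc)
  finally show ?thesis .
qed

lemma Kd_corr:
  "(\<Sum>a<2^N. Cd N K a * (cmod (f a))^2) = (\<Sum>i\<in>{1..<N+1}. \<Sum>j\<in>{i+1..<N+1}. K i j * corr N f i j)"
proof -
  have "(\<Sum>a<2^N. Cd N K a * (cmod (f a))^2) = (\<Sum>a<2^N. \<Sum>i\<in>{1..<N+1}. \<Sum>j\<in>{i+1..<N+1}. K i j * (zs N i a * zs N j a) * (cmod (f a))^2)"
    unfolding Cd_def sum_distrib_right ..
  also have "\<dots> = (\<Sum>i\<in>{1..<N+1}. \<Sum>a<2^N. \<Sum>j\<in>{i+1..<N+1}. K i j * (zs N i a * zs N j a) * (cmod (f a))^2)"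
    by (rule sum.swap)
  also have "\<dots> = (\<Sum>i\<in>{1..<N+1}. \<Sum>j\<in>{i+1..<N+1}. \<Sum>a<2^N. K i j * (zs N i a * zs N j a) * (cmod (f a))^2)"
    by (rule sum.cong[OF refl], rule sum.swap)
  also have "\<dots> = (\<Sum>i\<in>{1..<N+1}. \<Sum>j\<in>{i+1..<N+1}. K i j * corr N f i j)"
    unfolding corr_def sum_distrib_left by (intro sum.cong refl) (simp only: mult.assoc)
  finally show ?thesis .
qed


theorem mainTheorem4:
  fixes N :: nat and \<Omega> \<delta> hbar :: real
    and J1 J2 :: "nat \<Rightarrow> nat \<Rightarrow> real" and \<psi>1 \<psi>2 :: "complex vec"
  assumes "N \<ge> 2" and "\<Omega> \<noteq> 0" and "hbar > 0"
    and "ground_state (hamiltonian N \<Omega> \<delta> J1) \<psi>1"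
    and "ground_state (hamiltonian N \<Omega> \<delta> J2) \<psi>2"
    and "\<forall>i j. 1 \<le> i \<and> i < j \<and> j \<le> N \<longrightarrow>
           correlation hbar N \<psi>1 i j = correlation hbar N \<psi>2 i j"
  shows "\<forall>i j. 1 \<le> i \<and> i < j \<and> j \<le> N \<longrightarrow> J1 i j = J2 i j"
proof -
  note \<Omega> = assms(2) and hb = assms(3) and gs1 = assms(4) and gs2 = assms(5) and cor = assms(6)
  define n where "n = (2::nat)^N"
  have n0: "n > 0" unfolding n_def by simp
  define H1 where "H1 = hamiltonian N \<Omega> \<delta> J1"
  define H2 where "H2 = hamiltonian N \<Omega> \<delta> J2"
  define h1 where "h1 = (\<lambda>a b. H1 $$ (a,b))"
  define h2 where "h2 = (\<lambda>a b. H2 $$ (a,b))"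
  define f1 where "f1 = (\<lambda>i. \<psi>1 $ i)"
  define f2 where "f2 = (\<lambda>i. \<psi>2 $ i)"
  define DJ where "DJ = (\<lambda>i j. J1 i j - J2 i j)"
  have cH1: "H1 \<in> carrier_mat n n" unfolding H1_def n_def by (rule H_ce(1))
  have cH2: "H2 \<in> carrier_mat n n" unfolding H2_def n_def by (rule H_ce(1))
  have he1: "herm n h1" unfolding h1_def H1_def n_def by (rule H_herm)
  have he2: "herm n h2" unfolding h2_def H2_def n_def by (rule H_herm)
  have hd1: "h1 a b = of_real (\<Omega> * mc N a b + (if a = b then Dg N \<delta> J1 b else 0))" if "a < n" "b < n" for a b
    unfolding h1_def H1_def using that unfolding n_def by (rule H_ce(2))
  have hd2: "h2 a b = of_real (\<Omega> * mc N a b + (if a = b then Dg N \<delta> J2 b else 0))" if "a < n" "b < n" for a b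
    unfolding h2_def H2_def using that unfolding n_def by (rule H_ce(2))
  have hdiff: "h1 a b - h2 a b = (if a = b then of_real (Cd N DJ b) else 0)" if "a < n" "b < n" for a b
    using hd1[OF that] hd2[OF that] unfolding DJ_def Cd_sub[symmetric] Dg_def by (cases "a = b") simp_all
  obtain E1 where v1: "\<psi>1 \<in> carrier_vec n" and nf1': "nrm n (\<lambda>i. \<psi>1 $ i) = 1"
    and ev1': "\<forall>a<n. app n (\<lambda>a b. H1 $$ (a,b)) (\<lambda>i. \<psi>1 $ i) a = of_real E1 * \<psi>1 $ a"
    and mn1': "\<And>l g. (\<forall>a<n. app n (\<lambda>a b. H1 $$ (a,b)) g a = l * g a) \<Longrightarrow> (\<exists>a<n. g a \<noteq> 0) \<Longrightarrow> E1 \<le> Re l"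
    by (rule gs_coords[OF cH1 gs1[folded H1_def]]) (rule that; assumption)
  have nf1: "nrm n f1 = 1" unfolding f1_def by (fact nf1')
  have ev1: "\<forall>a<n. app n h1 f1 a = of_real E1 * f1 a" unfolding h1_def f1_def by (fact ev1')
  have mn1: "\<And>l g. (\<forall>a<n. app n h1 g a = l * g a) \<Longrightarrow> (\<exists>a<n. g a \<noteq> 0) \<Longrightarrow> E1 \<le> Re l"
    unfolding h1_def by (fact mn1')
  obtain E2 where v2: "\<psi>2 \<in> carrier_vec n" and nf2': "nrm n (\<lambda>i. \<psi>2 $ i) = 1"
    and ev2': "\<forall>a<n. app n (\<lambda>a b. H2 $$ (a,b)) (\<lambda>i. \<psi>2 $ i) a = of_real E2 * \<psi>2 $ a"
    and mn2': "\<And>l g. (\<forall>a<n. app n (\<lambda>a b. H2 $$ (a,b)) g a = l * g a) \<Longrightarrow> (\<exists>a<n. g a \<noteq> 0) \<Longrightarrow> E2 \<le> Re l"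
    by (rule gs_coords[OF cH2 gs2[folded H2_def]]) (rule that; assumption)
  have nf2: "nrm n f2 = 1" unfolding f2_def by (fact nf2')
  have ev2: "\<forall>a<n. app n h2 f2 a = of_real E2 * f2 a" unfolding h2_def f2_def by (fact ev2')
  have mn2: "\<And>l g. (\<forall>a<n. app n h2 g a = l * g a) \<Longrightarrow> (\<exists>a<n. g a \<noteq> 0) \<Longrightarrow> E2 \<le> Re l"
    unfolding h2_def by (fact mn2')
  have Qdiff: "Qf n h1 f = Qf n h2 f + of_real (\<Sum>a<n. Cd N DJ a * (cmod (f a))^2)" for f
  proof -
    have "Qf n (\<lambda>a b. h1 a b - h2 a b) f = of_real (\<Sum>a<n. Cd N DJ a * (cmod (f a))^2)"
      by (rule Qf_diag) (rule hdiff)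
    then show ?thesis unfolding Qf_sub by (simp add: algebra_simps)
  qed
  have corr_eq: "corr N f1 i j = corr N f2 i j" if "1 \<le> i" "i < j" "j \<le> N" for i j
  proof -
    have "correlation hbar N \<psi>1 i j = correlation hbar N \<psi>2 i j" using cor that by blast
    then have "complex_of_real ((hbar/2)^2 * corr N f1 i j) = complex_of_real ((hbar/2)^2 * corr N f2 i j)"
      using correlation_eq[OF v1[unfolded n_def]] correlation_eq[OF v2[unfolded n_def]] unfolding f1_def f2_def by simp
    then have "(hbar/2)^2 * corr N f1 i j = (hbar/2)^2 * corr N f2 i j" by (simp only: of_real_eq_iff)
    then show ?thesis using hb by simp
  qed
  define K where "K = (\<Sum>a<n. Cd N DJ a * (cmod (f1 a))^2)"
  have K2: "K = (\<Sum>a<n. Cd N DJ a * (cmod (f2 a))^2)"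
  proof -
    have "K = (\<Sum>i\<in>{1..<N+1}. \<Sum>j\<in>{i+1..<N+1}. DJ i j * corr N f1 i j)"
      unfolding K_def n_def by (rule Kd_corr)
    also have "\<dots> = (\<Sum>i\<in>{1..<N+1}. \<Sum>j\<in>{i+1..<N+1}. DJ i j * corr N f2 i j)"
      by (intro sum.cong refl) (simp add: corr_eq)
    also have "\<dots> = (\<Sum>a<n. Cd N DJ a * (cmod (f2 a))^2)"
      unfolding n_def by (rule Kd_corr[symmetric])
    finally show ?thesis .
  qed
  have Q11: "Re (Qf n h1 f1) = E1" using Qf_ev[OF ev1] nf1 by simp
  have Q22: "Re (Qf n h2 f2) = E2" using Qf_ev[OF ev2] nf2 by simp
  have Q12: "Re (Qf n h1 f2) = E2 + K" using Qdiff[of f2] Q22 K2 by simp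
  have Q21: "Re (Qf n h2 f1) = E1 - K" using Qdiff[of f1] Q11 K_def by simp
  have var1: "E1 * nrm n f2 \<le> Re (Qf n h1 f2) \<and> (Re (Qf n h1 f2) = E1 * nrm n f2 \<longrightarrow> (\<forall>a<n. app n h1 f2 a = E1 * f2 a))"
    by (rule variational[OF he1 n0 mn1]) auto
  have var2: "E2 * nrm n f1 \<le> Re (Qf n h2 f1)"
    using variational[OF he2 n0 mn2, where f = f1] by auto
  have "E1 \<le> E2 + K" using var1 nf2 Q12 by simp
  moreover have "E2 \<le> E1 - K" using var2 nf1 Q21 by simp
  ultimately have "Re (Qf n h1 f2) = E1 * nrm n f2" using Q12 nf2 by simp
  then have ev12: "\<forall>a<n. app n h1 f2 a = E1 * f2 a" using var1 by blast
  have nz: "\<forall>a<n. f2 a \<noteq> 0"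
    by (rule pf[OF \<Omega> hd2[unfolded n_def] he2[unfolded n_def] mn2[unfolded n_def] nf2[unfolded n_def] ev2[unfolded n_def], folded n_def])
  have const: "\<forall>a<2^N. Cd N DJ a = E1 - E2"
  proof (intro allI impI)
    fix a assume "a < (2::nat)^N"
    then have a: "a < n" unfolding n_def .
    have "app n (\<lambda>a b. h1 a b - h2 a b) f2 a = of_real (Cd N DJ a) * f2 a"
      by (rule app_diag[OF hdiff a])
    also have "app n (\<lambda>a b. h1 a b - h2 a b) f2 a = of_real (E1 - E2) * f2 a"
      unfolding app_sub using ev12 ev2 a by (simp add: algebra_simps)
    finally have "of_real (Cd N DJ a) * f2 a = of_real (E1 - E2) * f2 a" ..
    then have "complex_of_real (Cd N DJ a) = of_real (E1 - E2)" using nz a by simp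
    then show "Cd N DJ a = E1 - E2" by (simp only: of_real_eq_iff)
  qed
  show ?thesis
  proof (intro allI impI)
    fix i j assume "1 \<le> i \<and> i < j \<and> j \<le> N"
    then have "DJ i j = 0" using fourier[OF const] by blast
    then show "J1 i j = J2 i j" unfolding DJ_def by simp
  qed
qed

end
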